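(* Let $(l_i)$ be a family of pairwise distinct labels indexed by a set containing the finite index sets $I,J$, and let $\sigma_i,\tau_j\in\mathbb{T}$. Then: (1) $\langle l_i:\sigma_i\mid i\in I\rangle\le\langle l_j:\tau_j\mid j\in J\rangle$ iff $J\subseteq I$ and $\sigma_j\le\tau_j$ for all $j\in J$; (2) $\langle l_i:\sigma_i\mid i\in I\rangle\cap\langle l_j:\tau_j\mid j\in J\rangle=\langle l_i:\sigma_i,\ l_j:\tau_j,\ l_k:\sigma_k\cap\tau_k\mid i\in I\setminus J,\ j\in J\setminus I,\ k\in I\cap J\rangle$; (3) $\langle l_i:\sigma_i\mid i\in I\rangle+\langle l_j:\tau_j\mid j\in J\rangle=\langle l_i:\sigma_i,\ l_j:\tau_j\mid i\in I\setminus J,\ j\in J\rangle$; (4) for every $\rho\in\mathbb{T}_R$ there exist finite $I$, distinct labels $l_i$ and types $\sigma_i$ with $\rho=\langle l_i:\sigma_i\mid i\in I\rangle$.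
   Context: $\mathbb{T}\ni\sigma ::= a\mid\omega\mid\sigma_1\to\sigma_2\mid\sigma_1\cap\sigma_2\mid\rho$ and record types $\mathbb{T}_R\ni\rho ::= \langle\rangle\mid\langle l:\sigma\rangle\mid\rho_1+\rho_2\mid\rho_1\cap\rho_2$ ($a$ type constants, $l$ labels). Subtyping $\le$ is the least preorder with: $\sigma\le\omega$; $\omega\le\omega\to\omega$; $\sigma\cap\tau\le\sigma$; $\sigma\cap\tau\le\tau$; $\sigma\le\tau_1,\sigma\le\tau_2\Rightarrow\sigma\le\tau_1\cap\tau_2$; $(\sigma\to\tau_1)\cap(\sigma\to\tau_2)\le\sigma\to\tau_1\cap\tau_2$; $\sigma_2\le\sigma_1,\tau_1\le\tau_2\Rightarrow\sigma_1\to\tau_1\le\sigma_2\to\tau_2$; $\langle l:\sigma\rangle\le\langle\rangle$; $\langle l:\sigma\rangle\cap\langle l:\tau\rangle\le\langle l:\sigma\cap\tau\rangle$; $\sigma\le\tau\Rightarrow\langle l:\sigma\rangle\le\langle l:\tau\rangle$; $\rho+\langle\rangle=\langle\rangle+\rho=\rho$; $(\rho_1+\rho_2)+\rho_3=\rho_1+(\rho_2+\rho_3)$; $(\rho_1\cap\rho_2)+\rho_3=(\rho_1+\rho_3)\cap(\rho_2+\rho_3)$; $\langle l:\sigma\rangle+(\langle l:\tau\rangle\cap\rho)=\langle l:\tau\rangle\cap\rho$; $\langle l:\sigma\rangle+(\langle l':\tau\rangle\cap\rho)=\langle l':\tau\rangle\cap(\langle l:\sigma\rangle+\rho)$ if $l\neq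 l'$; $\rho_1\le\rho_2\Rightarrow\rho_1+\rho\le\rho_2+\rho$; $\rho_1=\rho_2\Rightarrow\rho+\rho_1=\rho+\rho_2$. $\sigma=\tau$ means $\sigma\le\tau$ and $\tau\le\sigma$. Notation: for pairwise distinct labels, $\langle l_i:\sigma_i\mid i\in I\rangle$ stands for $\bigcap_{i\in I}\langle l_i:\sigma_i\rangle$ if $I\neq\emptyset$ and for $\langle\rangle$ if $I=\emptyset$ (intersections taken up to associativity and commutativity). *)

theory Defs
  imports Main
begin

text \<open>Record types and ordinary
types share one datatype; the intersection constructor is shared, so that
rho1 \<inter> rho2 (record) is literally the type intersection of two record types.\<close>
datatype ('a, 'l) ty =
    Atom 'a
  | Omega
  | Arrow "('a, 'l) ty" "('a, 'l) ty"
  | Inter "('a, 'l) ty" "('a, 'l) ty"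
  | REmpty
  | RField 'l "('a, 'l) ty"
  | RPlus "('a, 'l) ty" "('a, 'l) ty"

text \<open>The well-formed types T (tp) and record types T_R (rt).\<close>
inductive tp :: "('a, 'l) ty \<Rightarrow> bool" and rt :: "('a, 'l) ty \<Rightarrow> bool" where
  tp_atom: "tp (Atom a)"
| tp_omega: "tp Omega"
| tp_arrow: "tp s \<Longrightarrow> tp t \<Longrightarrow> tp (Arrow s t)"
| tp_inter: "tp s \<Longrightarrow> tp t \<Longrightarrow> tp (Inter s t)"
| tp_rec: "rt r \<Longrightarrow> tp r"
| rt_empty: "rt REmpty"
| rt_field: "tp s \<Longrightarrow> rt (RField l s)"
| rt_plus: "rt r1 \<Longrightarrow> rt r2 \<Longrightarrow> rt (RPlus r1 r2)"
| rt_inter: "rt r1 \<Longrightarrow> rt r2 \<Longrightarrow> rt (Inter r1 r2)"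

text \<open>Subtyping: the least preorder on T closed under the given rules.
An equation rho = rho' among the axioms stands for both inequalities.\<close>
inductive sub :: "('a, 'l) ty \<Rightarrow> ('a, 'l) ty \<Rightarrow> bool" where
  refl: "tp s \<Longrightarrow> sub s s"
| trans: "sub s t \<Longrightarrow> sub t u \<Longrightarrow> sub s u"
| top: "tp s \<Longrightarrow> sub s Omega"
| omega_arrow: "sub Omega (Arrow Omega Omega)"
| inter_l: "tp s \<Longrightarrow> tp t \<Longrightarrow> sub (Inter s t) s"
| inter_r: "tp s \<Longrightarrow> tp t \<Longrightarrow> sub (Inter s t) t"
| glb: "sub s t1 \<Longrightarrow> sub s t2 \<Longrightarrow> sub s (Inter t1 t2)"
| arrow_inter: "tp s \<Longrightarrow> tp t1 \<Longrightarrow> tp t2 \<Longrightarrow>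
    sub (Inter (Arrow s t1) (Arrow s t2)) (Arrow s (Inter t1 t2))"
| arrow: "sub s2 s1 \<Longrightarrow> sub t1 t2 \<Longrightarrow> sub (Arrow s1 t1) (Arrow s2 t2)"
| field_empty: "tp s \<Longrightarrow> sub (RField l s) REmpty"
| field_inter: "tp s \<Longrightarrow> tp t \<Longrightarrow> sub (Inter (RField l s) (RField l t)) (RField l (Inter s t))"
| field: "sub s t \<Longrightarrow> sub (RField l s) (RField l t)"
| plus_empty_r1: "rt r \<Longrightarrow> sub (RPlus r REmpty) r"
| plus_empty_r2: "rt r \<Longrightarrow> sub r (RPlus r REmpty)"
| plus_empty_l1: "rt r \<Longrightarrow> sub (RPlus REmpty r) r"
| plus_empty_l2: "rt r \<Longrightarrow> sub r (RPlus REmpty r)"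
| plus_assoc1: "rt r1 \<Longrightarrow> rt r2 \<Longrightarrow> rt r3 \<Longrightarrow>
    sub (RPlus (RPlus r1 r2) r3) (RPlus r1 (RPlus r2 r3))"
| plus_assoc2: "rt r1 \<Longrightarrow> rt r2 \<Longrightarrow> rt r3 \<Longrightarrow>
    sub (RPlus r1 (RPlus r2 r3)) (RPlus (RPlus r1 r2) r3)"
| plus_distrib1: "rt r1 \<Longrightarrow> rt r2 \<Longrightarrow> rt r3 \<Longrightarrow>
    sub (RPlus (Inter r1 r2) r3) (Inter (RPlus r1 r3) (RPlus r2 r3))"
| plus_distrib2: "rt r1 \<Longrightarrow> rt r2 \<Longrightarrow> rt r3 \<Longrightarrow>
    sub (Inter (RPlus r1 r3) (RPlus r2 r3)) (RPlus (Inter r1 r2) r3)"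
| plus_override1: "tp s \<Longrightarrow> tp t \<Longrightarrow> rt r \<Longrightarrow>
    sub (RPlus (RField l s) (Inter (RField l t) r)) (Inter (RField l t) r)"
| plus_override2: "tp s \<Longrightarrow> tp t \<Longrightarrow> rt r \<Longrightarrow>
    sub (Inter (RField l t) r) (RPlus (RField l s) (Inter (RField l t) r))"
| plus_swap1: "l \<noteq> l' \<Longrightarrow> tp s \<Longrightarrow> tp t \<Longrightarrow> rt r \<Longrightarrow>
    sub (RPlus (RField l s) (Inter (RField l' t) r)) (Inter (RField l' t) (RPlus (RField l s) r))"
| plus_swap2: "l \<noteq> l' \<Longrightarrow> tp s \<Longrightarrow> tp t \<Longrightarrow> rt r \<Longrightarrow>
    sub (Inter (RField l' t) (RPlus (RField l s) r)) (RPlus (RField l s) (Inter (RField l' t) r))"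
| plus_mono: "sub r1 r2 \<Longrightarrow> rt r1 \<Longrightarrow> rt r2 \<Longrightarrow> rt r \<Longrightarrow> sub (RPlus r1 r) (RPlus r2 r)"
| plus_cong: "sub r1 r2 \<Longrightarrow> sub r2 r1 \<Longrightarrow> rt r \<Longrightarrow> rt r1 \<Longrightarrow> rt r2 \<Longrightarrow>
    sub (RPlus r r1) (RPlus r r2)"

definition eqt :: "('a, 'l) ty \<Rightarrow> ('a, 'l) ty \<Rightarrow> bool" where
  "eqt s t \<longleftrightarrow> sub s t \<and> sub t s"

text \<open>Record notation <l_i : s_i | i in I>: for a nonempty I, an intersection
of single-field records (in some fixed enumeration of I; the order is
immaterial up to =); for I empty, the empty record.\<close>
fun recl :: "('l \<times> ('a, 'l) ty) list \<Rightarrow> ('a, 'l) ty" where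
  "recl [] = REmpty"
| "recl [(l, s)] = RField l s"
| "recl ((l, s) # y # xs) = Inter (RField l s) (recl (y # xs))"

definition rec_of :: "'i set \<Rightarrow> ('i \<Rightarrow> 'l) \<Rightarrow> ('i \<Rightarrow> ('a, 'l) ty) \<Rightarrow> ('a, 'l) ty" where
  "rec_of I l s = recl (map (\<lambda>i. (l i, s i)) (SOME xs. set xs = I \<and> distinct xs))"

end

theory Submission
  imports Defs
begin

lemma sub_tp: "sub s t \<Longrightarrow> tp s \<and> tp t"
  by (induction rule: sub.induct) (auto intro: tp_rt.intros)

definition mrg :: "('l \<Rightarrow> ('a,'l) ty option) \<Rightarrow> ('l \<Rightarrow> ('a,'l) ty option) \<Rightarrow> 'l \<Rightarrow> ('a,'l) ty option" where
  "mrg f g x = (case f x of None \<Rightarrow> g x | Some a \<Rightarrow> (case g x of None \<Rightarrow> Some a | Some b \<Rightarrow> Some (Inter a b)))"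

fun fm :: "('a,'l) ty \<Rightarrow> 'l \<Rightarrow> ('a,'l) ty option" where
  "fm (Inter a b) = mrg (fm a) (fm b)"
| "fm REmpty = Map.empty"
| "fm (RField l s) = [l \<mapsto> s]"
| "fm (RPlus a b) = fm a ++ fm b"
| "fm (Atom a) = Map.empty"
| "fm Omega = Map.empty"
| "fm (Arrow a b) = Map.empty"

lemma fm_tp: fixes t r :: "('a,'l) ty" shows "tp t \<Longrightarrow> (\<forall>l b. fm t l = Some b \<longrightarrow> tp b)"
  and "rt r \<Longrightarrow> (\<forall>l b. fm r l = Some b \<longrightarrow> tp b)"
  by (induct t and r rule: tp_rt.inducts) (auto simp: mrg_def map_add_Some_iff intro: tp_rt.intros split: option.splits)

lemma fm_tp': "rt r \<Longrightarrow> fm r l = Some b \<Longrightarrow> tp b"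
  using fm_tp(2) by blast

lemma sub_II: "tp x \<Longrightarrow> sub x (Inter x x)"
  by (simp add: sub.glb sub.refl)

lemma refl_inter: "tp a \<Longrightarrow> tp b \<Longrightarrow> sub (Inter a b) (Inter a b)"
  by (simp add: sub.refl tp_rt.intros)

lemma fm_refl: "rt r \<Longrightarrow> fm r l = Some b \<Longrightarrow> sub b b"
  using fm_tp(2) sub.refl by blast

lemma sub_fm: "sub s t \<Longrightarrow> fm t l = Some b \<Longrightarrow> \<exists>a. fm s l = Some a \<and> sub a b"
proof (induction arbitrary: b rule: sub.induct)
  case (refl s)
  then show ?case using fm_tp(1)[OF refl(1)] by (auto intro: refl_inter sub.refl fm_refl)
next
  case (trans s t u)
  then show ?case by (meson sub.trans)
next
  case (inter_l s t)
  then show ?case using fm_tp(1)[OF inter_l(1)] fm_tp(1)[OF inter_l(2)]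
    by (auto simp: mrg_def intro: refl_inter sub.refl fm_refl sub.inter_l split: option.splits)
next
  case (inter_r s t)
  then show ?case using fm_tp(1)[OF inter_r(1)] fm_tp(1)[OF inter_r(2)]
    by (auto simp: mrg_def intro: refl_inter sub.refl fm_refl sub.inter_r split: option.splits)
next
  case (glb s t1 t2)
  then show ?case by (auto simp: mrg_def intro: sub.glb split: option.splits)
next
  case (field_inter s t l')
  then show ?case by (auto simp: mrg_def intro: refl_inter sub.refl fm_refl tp_rt.intros fm_tp' split: if_splits)
next
  case (field s t l')
  then show ?case by (auto split: if_splits)
next
  case (plus_empty_r1 r)
  then show ?case using fm_tp(2)[OF plus_empty_r1(1)] by (auto intro: refl_inter sub.refl fm_refl)
next
  case (plus_empty_r2 r)
  then show ?case using fm_tp(2)[OF plus_empty_r2(1)] by (auto intro: refl_inter sub.refl fm_refl)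
next
  case (plus_empty_l1 r)
  then show ?case using fm_tp(2)[OF plus_empty_l1(1)] by (auto intro: refl_inter sub.refl fm_refl)
next
  case (plus_empty_l2 r)
  then show ?case using fm_tp(2)[OF plus_empty_l2(1)] by (auto intro: refl_inter sub.refl fm_refl)
next
  case (plus_assoc1 r1 r2 r3)
  then show ?case using fm_tp(2)[OF plus_assoc1(1)] fm_tp(2)[OF plus_assoc1(2)] fm_tp(2)[OF plus_assoc1(3)]
    by (auto simp: map_add_Some_iff intro: refl_inter sub.refl fm_refl)
next
  case (plus_assoc2 r1 r2 r3)
  then show ?case using fm_tp(2)[OF plus_assoc2(1)] fm_tp(2)[OF plus_assoc2(2)] fm_tp(2)[OF plus_assoc2(3)]
    by (auto simp: map_add_Some_iff intro: refl_inter sub.refl fm_refl)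
next
  case (plus_distrib1 r1 r2 r3)
  then show ?case using fm_tp(2)[OF plus_distrib1(1)] fm_tp(2)[OF plus_distrib1(2)] fm_tp(2)[OF plus_distrib1(3)]
    by (auto simp: map_add_def mrg_def intro: refl_inter sub.refl fm_refl sub.inter_l tp_rt.intros fm_tp' sub_II split: option.splits)
next
  case (plus_distrib2 r1 r2 r3)
  then show ?case using fm_tp(2)[OF plus_distrib2(1)] fm_tp(2)[OF plus_distrib2(2)] fm_tp(2)[OF plus_distrib2(3)]
    by (auto simp: map_add_def mrg_def intro: refl_inter sub.refl fm_refl sub.glb tp_rt.intros fm_tp' sub.inter_l split: option.splits)
next
  case (plus_override1 s t r l')
  then show ?case using fm_tp(2)[OF plus_override1(3)]
    by (auto simp: map_add_def mrg_def intro: refl_inter sub.refl fm_refl tp_rt.intros fm_tp' split: option.splits if_splits)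
next
  case (plus_override2 s t r l')
  then show ?case using fm_tp(2)[OF plus_override2(3)]
    by (auto simp: map_add_def mrg_def intro: refl_inter sub.refl fm_refl tp_rt.intros fm_tp' split: option.splits if_splits)
next
  case (plus_swap1 l' l'' s t r)
  then show ?case using fm_tp(2)[OF plus_swap1(4)]
    by (auto simp: map_add_def mrg_def intro: refl_inter sub.refl fm_refl tp_rt.intros fm_tp' split: option.splits if_splits)
next
  case (plus_swap2 l' l'' s t r)
  then show ?case using fm_tp(2)[OF plus_swap2(4)]
    by (auto simp: map_add_def mrg_def intro: refl_inter sub.refl fm_refl tp_rt.intros fm_tp' split: option.splits if_splits)
next
  case (plus_mono r1 r2 r)
  then show ?case using fm_tp(2)[OF plus_mono(4)]
    by (auto simp: map_add_def intro: refl_inter sub.refl fm_refl split: option.splits)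
next
  case (plus_cong r1 r2 r)
  then show ?case using fm_tp(2)[OF plus_cong(3)]
    by (fastforce simp: map_add_def intro: refl_inter sub.refl fm_refl split: option.splits)
qed auto

abbreviation tpf :: "('l \<times> ('a,'l) ty) list \<Rightarrow> bool" where
  "tpf xs \<equiv> \<forall>p\<in>set xs. tp (snd p)"

lemma rt_recl: "tpf xs \<Longrightarrow> rt (recl xs)"
  by (induction xs rule: recl.induct) (auto intro: tp_rt.intros)

lemma tp_recl: "tpf xs \<Longrightarrow> tp (recl xs)"
  by (simp add: rt_recl tp_rt.tp_rec)

lemma fm_recl: "distinct (map fst xs) \<Longrightarrow> fm (recl xs) = map_of xs"
proof (induction xs rule: recl.induct)
  case (3 l s y xs)
  then have "map_of (y # xs) l = None" by (simp add: map_of_eq_None_iff)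
  with 3 show ?case by (auto simp: mrg_def fun_eq_iff split: option.splits)
qed auto

lemma recl_proj: "tpf xs \<Longrightarrow> map_of xs l = Some s \<Longrightarrow> sub (recl xs) (RField l s)"
proof (induction xs rule: recl.induct)
  case (2 l' s')
  then show ?case by (auto split: if_splits intro: sub.refl tp_rt.intros)
next
  case (3 l' s' y xs)
  have t1: "tp (RField l' s')" using 3 by (auto intro: tp_rt.intros)
  have t2: "tp (recl (y # xs))" using 3 by (intro tp_recl) auto
  show ?case
  proof (cases "l = l'")
    case True
    then show ?thesis using 3 t1 t2 by (auto intro: sub.inter_l)
  next
    case False
    then have "sub (recl (y # xs)) (RField l s)" using 3 by auto
    then show ?thesis using sub.inter_r[OF t1 t2] by (auto intro: sub.trans)
  qed
qed auto

lemma recl_empty: "tpf xs \<Longrightarrow> sub (recl xs) REmpty"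
proof (induction xs rule: recl.induct)
  case 1
  then show ?case by (auto intro: sub.refl tp_rt.intros)
next
  case (2 l s)
  then show ?case by (auto intro: sub.field_empty)
next
  case (3 l s y xs)
  have t1: "tp (RField l s)" using 3 by (auto intro: tp_rt.intros)
  have t2: "tp (recl (y # xs))" using 3 by (intro tp_recl) auto
  show ?case using 3 sub.inter_r[OF t1 t2] by (auto intro: sub.trans)
qed

lemma recl_glb: "distinct (map fst zs) \<Longrightarrow> sub x REmpty \<Longrightarrow>
   (\<forall>l t. map_of zs l = Some t \<longrightarrow> sub x (RField l t)) \<Longrightarrow> sub x (recl zs)"
proof (induction zs rule: recl.induct)
  case (3 l s y xs)
  have "\<forall>l' t. map_of (y # xs) l' = Some t \<longrightarrow> sub x (RField l' t)"
  proof (intro allI impI)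
    fix l' t assume a: "map_of (y # xs) l' = Some t"
    then have "l' \<noteq> l" using 3(2) by (auto dest!: map_of_SomeD intro: rev_image_eqI)
    then show "sub x (RField l' t)" using 3(4) a by auto
  qed
  then show ?case using 3 by (auto intro: sub.glb)
qed auto

lemma recl_sub: "tpf xs \<Longrightarrow> distinct (map fst ys) \<Longrightarrow>
  (\<forall>l t. map_of ys l = Some t \<longrightarrow> (\<exists>s. map_of xs l = Some s \<and> sub s t)) \<Longrightarrow> sub (recl xs) (recl ys)"
proof (rule recl_glb)
  assume a: "tpf xs" "\<forall>l t. map_of ys l = Some t \<longrightarrow> (\<exists>s. map_of xs l = Some s \<and> sub s t)"
  show "sub (recl xs) REmpty" using a(1) by (rule recl_empty)
  show "\<forall>l t. map_of ys l = Some t \<longrightarrow> sub (recl xs) (RField l t)"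
  proof (intro allI impI)
    fix l t assume "map_of ys l = Some t"
    then obtain s where "map_of xs l = Some s" "sub s t" using a by blast
    then show "sub (recl xs) (RField l t)" using a recl_proj sub.trans sub.field by metis
  qed
qed

lemma recl_sub_iff: "tpf xs \<Longrightarrow> distinct (map fst xs) \<Longrightarrow> distinct (map fst ys) \<Longrightarrow>
  sub (recl xs) (recl ys) \<longleftrightarrow> (\<forall>l t. map_of ys l = Some t \<longrightarrow> (\<exists>s. map_of xs l = Some s \<and> sub s t))"
  using recl_sub sub_fm fm_recl by metis

lemma tpf_map_of: "tpf xs \<Longrightarrow> map_of xs l = Some s \<Longrightarrow> tp s"
  by (auto dest!: map_of_SomeD)

lemma recl_inter:
  assumes tx: "tpf xs" and ty: "tpf ys" and tz: "tpf zs"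
    and dx: "distinct (map fst xs)" and dy: "distinct (map fst ys)" and dz: "distinct (map fst zs)"
    and m: "map_of zs = mrg (map_of xs) (map_of ys)"
  shows "eqt (Inter (recl xs) (recl ys)) (recl zs)"
proof -
  have tX: "tp (recl xs)" using tx by (rule tp_recl)
  have tY: "tp (recl ys)" using ty by (rule tp_recl)
  have iX: "sub (Inter (recl xs) (recl ys)) (recl xs)" using tX tY by (rule sub.inter_l)
  have iY: "sub (Inter (recl xs) (recl ys)) (recl ys)" using tX tY by (rule sub.inter_r)
  have A: "sub (Inter (recl xs) (recl ys)) (recl zs)"
  proof (rule recl_glb[OF dz])
    show "sub (Inter (recl xs) (recl ys)) REmpty" using iX recl_empty[OF tx] by (rule sub.trans)
    show "\<forall>l t. map_of zs l = Some t \<longrightarrow> sub (Inter (recl xs) (recl ys)) (RField l t)"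
    proof (intro allI impI)
      fix l t assume "map_of zs l = Some t"
      then have h: "mrg (map_of xs) (map_of ys) l = Some t" using m by simp
      show "sub (Inter (recl xs) (recl ys)) (RField l t)"
      proof (cases "map_of xs l")
        case None
        then have "map_of ys l = Some t" using h by (simp add: mrg_def)
        then show ?thesis using iY recl_proj[OF ty] sub.trans by blast
      next
        case (Some s)
        show ?thesis
        proof (cases "map_of ys l")
          case None
          then have "map_of xs l = Some t" using h Some by (simp add: mrg_def)
          then show ?thesis using iX recl_proj[OF tx] sub.trans by blast
        next
          case (Some u)
          with \<open>map_of xs l = Some s\<close> h have tt: "t = Inter s u" by (simp add: mrg_def)
          have ts: "tp s" using tpf_map_of[OF tx \<open>map_of xs l = Some s\<close>] .
          have tu: "tp u" using tpf_map_of[OF ty Some] .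
          have "sub (Inter (recl xs) (recl ys)) (Inter (RField l s) (RField l u))"
            using iX iY recl_proj[OF tx \<open>map_of xs l = Some s\<close>] recl_proj[OF ty Some]
            by (meson sub.glb sub.trans)
          then show ?thesis using tt sub.field_inter[OF ts tu] sub.trans by blast
        qed
      qed
    qed
  qed
  have B1: "sub (recl zs) (recl xs)"
  proof (rule recl_sub[OF tz dx], intro allI impI)
    fix l t assume a: "map_of xs l = Some t"
    have tt: "tp t" using tpf_map_of[OF tx a] .
    show "\<exists>s. map_of zs l = Some s \<and> sub s t"
    proof (cases "map_of ys l")
      case None then show ?thesis using a m tt by (auto simp: mrg_def intro: sub.refl)
    next
      case (Some u) then show ?thesis using a m tt tpf_map_of[OF ty Some]
        by (auto simp: mrg_def intro: sub.inter_l)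
    qed
  qed
  have B2: "sub (recl zs) (recl ys)"
  proof (rule recl_sub[OF tz dy], intro allI impI)
    fix l t assume a: "map_of ys l = Some t"
    have tt: "tp t" using tpf_map_of[OF ty a] .
    show "\<exists>s. map_of zs l = Some s \<and> sub s t"
    proof (cases "map_of xs l")
      case None then show ?thesis using a m tt by (auto simp: mrg_def intro: sub.refl)
    next
      case (Some u) then show ?thesis using a m tt tpf_map_of[OF tx Some]
        by (auto simp: mrg_def intro: sub.inter_r)
    qed
  qed
  show ?thesis unfolding eqt_def using A B1 B2 by (auto intro: sub.glb)
qed

lemma single_plus:
  fixes ys :: "('l \<times> ('a,'l) ty) list"
  assumes "tpf ys" "distinct (map fst ys)" "tp t"
  shows "(map_of ys l = None \<longrightarrow> sub (RPlus (RField l t) (recl ys)) (RField l t))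
       \<and> (map_of ys l = None \<longrightarrow> sub (Inter (RField l t) (recl ys)) (RPlus (RField l t) (recl ys)))
       \<and> (map_of ys l \<noteq> None \<longrightarrow> sub (recl ys) (RPlus (RField l t) (recl ys)))"
  using assms
proof (induction ys rule: recl.induct)
  case 1
  have rT: "rt (RField l t)" using 1 by (auto intro: tp_rt.intros)
  have tT: "tp (RField l t)" using rT by (rule tp_rt.tp_rec)
  have tE: "tp (REmpty :: ('a,'l) ty)" by (auto intro: tp_rt.intros)
  show ?case using sub.plus_empty_r1[OF rT] sub.plus_empty_r2[OF rT] sub.inter_l[OF tT tE]
    by (auto intro: sub.trans)
next
  case (2 l' u)
  let ?T = "RField l t" and ?F = "RField l' u" and ?E = "Inter (RField l' u) REmpty"
  have tu: "tp u" using 2 by auto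
  have rT: "rt ?T" using 2 by (auto intro: tp_rt.intros)
  have rF: "rt ?F" using tu by (auto intro: tp_rt.intros)
  have rE: "rt ?E" using tu by (auto intro: tp_rt.intros)
  have rEm: "rt (REmpty :: ('a,'l) ty)" by (auto intro: tp_rt.intros)
  have tT: "tp ?T" and tF: "tp ?F" and tE: "tp ?E" and tEm: "tp (REmpty :: ('a,'l) ty)"
    using rT rF rE rEm by (auto intro: tp_rt.tp_rec)
  have FE: "sub ?F ?E" using tF tu by (auto intro: sub.glb sub.refl sub.field_empty)
  have EF: "sub ?E ?F" using tF tEm by (rule sub.inter_l)
  have c1: "sub (RPlus ?T ?F) (RPlus ?T ?E)" using FE EF rT rF rE by (rule sub.plus_cong)
  have c2: "sub (RPlus ?T ?E) (RPlus ?T ?F)" using EF FE rT rE rF by (rule sub.plus_cong)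
  have tTE: "tp (RPlus ?T REmpty)" using rT rEm by (auto intro: tp_rt.intros)
  have S1: "sub (RPlus ?T ?F) ?T" if ne: "l \<noteq> l'"
  proof -
    have "sub (RPlus ?T ?E) (Inter ?F (RPlus ?T REmpty))"
      using sub.plus_swap1[OF ne \<open>tp t\<close> tu rEm] .
    moreover have "sub (Inter ?F (RPlus ?T REmpty)) (RPlus ?T REmpty)" using tF tTE by (rule sub.inter_r)
    ultimately show ?thesis using c1 sub.plus_empty_r1[OF rT] sub.trans by meson
  qed
  have S2: "sub (Inter ?T ?F) (RPlus ?T ?F)" if ne: "l \<noteq> l'"
  proof -
    have "sub (Inter ?T ?F) (Inter ?F (RPlus ?T REmpty))"
      using sub.inter_r[OF tT tF] sub.inter_l[OF tT tF] sub.plus_empty_r2[OF rT]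
      by (meson sub.glb sub.trans)
    moreover have "sub (Inter ?F (RPlus ?T REmpty)) (RPlus ?T ?E)"
      using sub.plus_swap2[OF ne \<open>tp t\<close> tu rEm] .
    ultimately show ?thesis using c2 sub.trans by meson
  qed
  have S3: "sub ?F (RPlus ?T ?F)" if eq: "l = l'"
  proof -
    have "sub ?E (RPlus ?T ?E)" using sub.plus_override2[OF \<open>tp t\<close> tu rEm] eq by simp
    then show ?thesis using FE c2 sub.trans by meson
  qed
  show ?case using S1 S2 S3 by auto
next
  case (3 l' u y ys)
  let ?T = "RField l t" and ?F = "RField l' u" and ?Y = "recl (y # ys)"
  have IH: "(map_of (y # ys) l = None \<longrightarrow> sub (RPlus ?T ?Y) ?T)
       \<and> (map_of (y # ys) l = None \<longrightarrow> sub (Inter ?T ?Y) (RPlus ?T ?Y))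
       \<and> (map_of (y # ys) l \<noteq> None \<longrightarrow> sub ?Y (RPlus ?T ?Y))"
    using 3 by auto
  have tu: "tp u" using 3 by auto
  have rY: "rt ?Y" using 3 by (intro rt_recl) auto
  have rT: "rt ?T" using 3 by (auto intro: tp_rt.intros)
  have tT: "tp ?T" and tF: "tp ?F" and tY: "tp ?Y" and tTY: "tp (RPlus ?T ?Y)"
    using rT rY tu by (auto intro: tp_rt.intros)
  have tFY: "tp (Inter ?F ?Y)" using tF tY by (rule tp_rt.tp_inter)
  have e: "recl ((l', u) # y # ys) = Inter ?F ?Y" by simp
  have S1: "sub (RPlus ?T (Inter ?F ?Y)) ?T" if ne: "l \<noteq> l'" and n: "map_of (y # ys) l = None"
  proof -
    have "sub (RPlus ?T (Inter ?F ?Y)) (Inter ?F (RPlus ?T ?Y))" using sub.plus_swap1[OF ne \<open>tp t\<close> tu rY] .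
    moreover have "sub (Inter ?F (RPlus ?T ?Y)) (RPlus ?T ?Y)" using tF tTY by (rule sub.inter_r)
    ultimately show ?thesis using IH n sub.trans by meson
  qed
  have S2: "sub (Inter ?T (Inter ?F ?Y)) (RPlus ?T (Inter ?F ?Y))" if ne: "l \<noteq> l'" and n: "map_of (y # ys) l = None"
  proof -
    have a1: "sub (Inter ?T (Inter ?F ?Y)) ?F" using sub.inter_r[OF tT tFY] sub.inter_l[OF tF tY] sub.trans by blast
    have a2: "sub (Inter ?T (Inter ?F ?Y)) ?Y" using sub.inter_r[OF tT tFY] sub.inter_r[OF tF tY] sub.trans by blast
    have a3: "sub (Inter ?T (Inter ?F ?Y)) ?T" using sub.inter_l[OF tT tFY] .
    have "sub (Inter ?T (Inter ?F ?Y)) (Inter ?T ?Y)" using a2 a3 by (rule sub.glb[rotated])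
    then have "sub (Inter ?T (Inter ?F ?Y)) (RPlus ?T ?Y)" using IH n sub.trans by meson
    then have "sub (Inter ?T (Inter ?F ?Y)) (Inter ?F (RPlus ?T ?Y))" using a1 by (rule sub.glb[rotated])
    then show ?thesis using sub.plus_swap2[OF ne \<open>tp t\<close> tu rY] sub.trans by meson
  qed
  have S3: "sub (Inter ?F ?Y) (RPlus ?T (Inter ?F ?Y))" if s: "map_of ((l', u) # y # ys) l \<noteq> None"
  proof (cases "l = l'")
    case True
    then show ?thesis using sub.plus_override2[OF \<open>tp t\<close> tu rY] by simp
  next
    case ne: False
    then have "map_of (y # ys) l \<noteq> None" using s by simp
    then have "sub (Inter ?F ?Y) (RPlus ?T ?Y)" using IH sub.inter_r[OF tF tY] sub.trans by meson
    then have "sub (Inter ?F ?Y) (Inter ?F (RPlus ?T ?Y))" using sub.inter_l[OF tF tY] by (rule sub.glb[rotated])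
    then show ?thesis using sub.plus_swap2[OF ne \<open>tp t\<close> tu rY] sub.trans by meson
  qed
  show ?case unfolding e using S1 S2 S3 by auto
qed

lemma plus_lower1:
  assumes "tpf ys" "distinct (map fst ys)" "tp s"
    and "sub w (recl ys)" and "map_of ys l = None \<Longrightarrow> sub w (RField l s)"
  shows "sub w (RPlus (RField l s) (recl ys))"
proof (cases "map_of ys l")
  case None
  have tT: "tp (RField l s)" using assms(3) by (auto intro: tp_rt.intros)
  have "sub w (Inter (RField l s) (recl ys))" using assms(4) assms(5)[OF None] by (auto intro: sub.glb)
  then show ?thesis using single_plus[OF assms(1-3), of l] None sub.trans by meson
next
  case (Some a)
  then show ?thesis using single_plus[OF assms(1-3), of l] assms(4) sub.trans by force
qed

lemma plus_lower:
  fixes xs :: "('l \<times> ('a,'l) ty) list"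
  assumes "tpf xs" "distinct (map fst xs)" "tpf ys" "distinct (map fst ys)"
  shows "sub w (recl ys) \<Longrightarrow> (\<forall>l s. map_of xs l = Some s \<longrightarrow> map_of ys l = None \<longrightarrow> sub w (RField l s))
     \<Longrightarrow> sub w (RPlus (recl xs) (recl ys))"
  using assms
proof (induction xs rule: recl.induct)
  case 1
  have "rt (recl ys)" using 1 by (intro rt_recl)
  then show ?case using 1 sub.plus_empty_l2 sub.trans by fastforce
next
  case (2 l s)
  then show ?case using plus_lower1[of ys s w l] by auto
next
  case (3 l s y xs)
  have ts: "tp s" using 3 by auto
  have A: "sub w (RPlus (RField l s) (recl ys))"
    using plus_lower1[OF 3(6,7) ts 3(2)] 3(3) by auto
  have B: "sub w (RPlus (recl (y # xs)) (recl ys))"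
  proof (rule 3(1)[OF 3(2)])
    show "\<forall>l' s'. map_of (y # xs) l' = Some s' \<longrightarrow> map_of ys l' = None \<longrightarrow> sub w (RField l' s')"
    proof (intro allI impI)
      fix l' s' assume a: "map_of (y # xs) l' = Some s'" "map_of ys l' = None"
      then have "l' \<noteq> l" using 3(5) by (auto dest!: map_of_SomeD intro: rev_image_eqI)
      then show "sub w (RField l' s')" using 3(3) a by auto
    qed
  qed (use 3 in auto)
  have r1: "rt (RField l s)" using ts by (auto intro: tp_rt.intros)
  have r2: "rt (recl (y # xs))" using 3 by (intro rt_recl) auto
  have r3: "rt (recl ys)" using 3 by (intro rt_recl) auto
  have "sub w (Inter (RPlus (RField l s) (recl ys)) (RPlus (recl (y # xs)) (recl ys)))"
    using A B by (rule sub.glb)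
  then show ?case using sub.plus_distrib2[OF r1 r2 r3] sub.trans by fastforce
qed

lemma recl_plus:
  fixes xs :: "('l \<times> ('a,'l) ty) list"
  assumes tx: "tpf xs" and ty: "tpf ys" and tz: "tpf zs"
    and dx: "distinct (map fst xs)" and dy: "distinct (map fst ys)" and dz: "distinct (map fst zs)"
    and m: "map_of zs = map_of xs ++ map_of ys"
  shows "eqt (RPlus (recl xs) (recl ys)) (recl zs)"
proof -
  have rX: "rt (recl xs)" using tx by (rule rt_recl)
  have rY: "rt (recl ys)" using ty by (rule rt_recl)
  have rE: "rt (REmpty :: ('a,'l) ty)" by (auto intro: tp_rt.intros)
  have PY: "sub (RPlus (recl xs) (recl ys)) (recl ys)"
    using sub.plus_mono[OF recl_empty[OF tx] rX rE rY] sub.plus_empty_l1[OF rY] sub.trans by blast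
  have A: "sub (RPlus (recl xs) (recl ys)) (recl zs)"
  proof (rule recl_glb[OF dz])
    show "sub (RPlus (recl xs) (recl ys)) REmpty" using PY recl_empty[OF ty] sub.trans by blast
    show "\<forall>l t. map_of zs l = Some t \<longrightarrow> sub (RPlus (recl xs) (recl ys)) (RField l t)"
    proof (intro allI impI)
      fix l t assume "map_of zs l = Some t"
      then have "map_of ys l = Some t \<or> (map_of ys l = None \<and> map_of xs l = Some t)"
        using m by (simp add: map_add_Some_iff)
      then show "sub (RPlus (recl xs) (recl ys)) (RField l t)"
      proof
        assume "map_of ys l = Some t"
        then show ?thesis using PY recl_proj[OF ty] sub.trans by blast
      next
        assume a: "map_of ys l = None \<and> map_of xs l = Some t"
        have tt: "tp t" using a tpf_map_of[OF tx] by blast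
        have rT: "rt (RField l t)" using tt by (auto intro: tp_rt.intros)
        have "sub (RPlus (recl xs) (recl ys)) (RPlus (RField l t) (recl ys))"
          using sub.plus_mono[OF recl_proj[OF tx] rX rT rY] a by blast
        then show ?thesis using single_plus[OF ty dy tt, of l] a sub.trans by meson
      qed
    qed
  qed
  have zy: "sub (recl zs) (recl ys)"
    using recl_sub[OF tz dy] m tpf_map_of[OF ty] by (auto simp: map_add_Some_iff intro: sub.refl)
  have B: "sub (recl zs) (RPlus (recl xs) (recl ys))"
  proof (rule plus_lower[OF tx dx ty dy zy], intro allI impI)
    fix l s assume "map_of xs l = Some s" "map_of ys l = None"
    then have "map_of zs l = Some s" using m by (simp add: map_add_Some_iff)
    then show "sub (recl zs) (RField l s)" using recl_proj[OF tz] by blast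
  qed
  show ?thesis unfolding eqt_def using A B by blast
qed

lemma eqt_trans: "eqt a b \<Longrightarrow> eqt b c \<Longrightarrow> eqt a c"
  unfolding eqt_def using sub.trans by blast

lemma recl_eq: "tpf xs \<Longrightarrow> tpf ys \<Longrightarrow> distinct (map fst xs) \<Longrightarrow> distinct (map fst ys) \<Longrightarrow>
  map_of xs = map_of ys \<Longrightarrow> eqt (recl xs) (recl ys)"
  unfolding eqt_def
proof
  assume a: "tpf xs" "tpf ys" "distinct (map fst xs)" "distinct (map fst ys)" "map_of xs = map_of ys"
  show "sub (recl xs) (recl ys)"
    by (rule recl_sub[OF a(1,4)]) (use a tpf_map_of sub.refl in metis)
  show "sub (recl ys) (recl xs)"
    by (rule recl_sub[OF a(2,3)]) (use a tpf_map_of sub.refl in metis)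
qed

lemma fin_rep:
  fixes m :: "'l \<Rightarrow> ('a,'l) ty option"
  assumes "finite (dom m)" "\<forall>l v. m l = Some v \<longrightarrow> tp v"
  shows "\<exists>zs. tpf zs \<and> distinct (map fst zs) \<and> map_of zs = m"
proof -
  obtain ks where ks: "set ks = dom m" "distinct ks" using finite_distinct_list[OF assms(1)] by blast
  let ?zs = "map (\<lambda>k. (k, the (m k))) ks"
  have "map_of ?zs = m"
    unfolding map_of_map_restrict ks(1)
  proof (rule ext)
    fix x show "((Some \<circ> (\<lambda>k. the (m k))) |` dom m) x = m x"
      by (cases "m x") (auto simp: restrict_map_def)
  qed
  moreover have "distinct (map fst ?zs)" using ks(2) by (simp add: o_def)
  moreover have "tpf ?zs" using ks(1) assms(2) by auto
  ultimately show ?thesis by blast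
qed

lemma rt_rep:
  fixes t r :: "('a,'l) ty"
  shows "tp t \<Longrightarrow> True"
  and "rt r \<Longrightarrow> \<exists>zs. tpf zs \<and> distinct (map fst zs) \<and> eqt r (recl zs)"
proof (induct t and r rule: tp_rt.inducts)
  case rt_empty
  have "eqt (REmpty :: ('a,'l) ty) (recl [])" unfolding eqt_def by (auto intro: sub.refl tp_rt.intros)
  then show ?case by (intro exI[of _ "[]"]) auto
next
  case (rt_field s l)
  have "eqt (RField l s) (recl [(l, s)])" unfolding eqt_def using rt_field by (auto intro: sub.refl tp_rt.intros)
  then show ?case using rt_field by (intro exI[of _ "[(l,s)]"]) auto
next
  case (rt_plus r1 r2)
  obtain z1 where z1: "tpf z1" "distinct (map fst z1)" "eqt r1 (recl z1)" using rt_plus by blast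
  obtain z2 where z2: "tpf z2" "distinct (map fst z2)" "eqt r2 (recl z2)" using rt_plus by blast
  obtain zs where zs: "tpf zs" "distinct (map fst zs)" "map_of zs = map_of z1 ++ map_of z2"
  proof -
    have fin: "finite (dom (map_of z1 ++ map_of z2))" by (simp add: finite_dom_map_of)
    have tps: "\<forall>l v. (map_of z1 ++ map_of z2) l = Some v \<longrightarrow> tp v"
      using z1(1) z2(1) by (metis map_add_Some_iff tpf_map_of)
    show ?thesis using fin_rep[OF fin tps] that by blast
  qed
  have rX1: "rt (recl z1)" using z1 by (intro rt_recl)
  have rX2: "rt (recl z2)" using z2 by (intro rt_recl)
  have "eqt (RPlus r1 r2) (RPlus (recl z1) (recl z2))"
    unfolding eqt_def
  proof
    have a: "sub r1 (recl z1)" "sub (recl z1) r1" "sub r2 (recl z2)" "sub (recl z2) r2"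
      using z1(3) z2(3) unfolding eqt_def by auto
    have b: "sub (RPlus r1 r2) (RPlus (recl z1) r2)" using sub.plus_mono[OF a(1) rt_plus(1) rX1 rt_plus(3)] .
    have c: "sub (RPlus (recl z1) r2) (RPlus (recl z1) (recl z2))" using sub.plus_cong[OF a(3) a(4) rX1 rt_plus(3) rX2] .
    show "sub (RPlus r1 r2) (RPlus (recl z1) (recl z2))" using b c by (rule sub.trans)
    have b': "sub (RPlus (recl z1) r2) (RPlus r1 r2)" using sub.plus_mono[OF a(2) rX1 rt_plus(1) rt_plus(3)] .
    have c': "sub (RPlus (recl z1) (recl z2)) (RPlus (recl z1) r2)" using sub.plus_cong[OF a(4) a(3) rX1 rX2 rt_plus(3)] .
    show "sub (RPlus (recl z1) (recl z2)) (RPlus r1 r2)" using c' b' by (rule sub.trans)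
  qed
  then have "eqt (RPlus r1 r2) (recl zs)" using recl_plus[OF z1(1) z2(1) zs(1) z1(2) z2(2) zs(2,3)] eqt_trans by blast
  then show ?case using zs by blast
next
  case (rt_inter r1 r2)
  obtain z1 where z1: "tpf z1" "distinct (map fst z1)" "eqt r1 (recl z1)" using rt_inter by blast
  obtain z2 where z2: "tpf z2" "distinct (map fst z2)" "eqt r2 (recl z2)" using rt_inter by blast
  have fin: "finite (dom (mrg (map_of z1) (map_of z2)))"
  proof (rule finite_subset)
    show "dom (mrg (map_of z1) (map_of z2)) \<subseteq> dom (map_of z1) \<union> dom (map_of z2)"
      by (auto simp: mrg_def split: option.splits)
  qed (auto simp: finite_dom_map_of)
  have tps: "\<forall>l v. mrg (map_of z1) (map_of z2) l = Some v \<longrightarrow> tp v"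
    using z1(1) z2(1) unfolding mrg_def by (auto split: option.splits intro: tp_rt.intros tpf_map_of)
  obtain zs where zs: "tpf zs" "distinct (map fst zs)" "map_of zs = mrg (map_of z1) (map_of z2)"
    using fin_rep[OF fin tps] by blast
  have t1: "tp r1" "tp r2" using rt_inter by (auto intro: tp_rt.intros)
  have t2: "tp (recl z1)" "tp (recl z2)" using z1 z2 by (auto intro: tp_recl)
  have "eqt (Inter r1 r2) (Inter (recl z1) (recl z2))"
    unfolding eqt_def
  proof
    show "sub (Inter r1 r2) (Inter (recl z1) (recl z2))"
      using sub.trans[OF sub.inter_l[OF t1]] sub.trans[OF sub.inter_r[OF t1]] z1(3) z2(3) unfolding eqt_def by (blast intro: sub.glb)
    show "sub (Inter (recl z1) (recl z2)) (Inter r1 r2)"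
      using sub.trans[OF sub.inter_l[OF t2]] sub.trans[OF sub.inter_r[OF t2]] z1(3) z2(3) unfolding eqt_def by (blast intro: sub.glb)
  qed
  then have "eqt (Inter r1 r2) (recl zs)" using recl_inter[OF z1(1) z2(1) zs(1) z1(2) z2(2) zs(2,3)] eqt_trans by blast
  then show ?case using zs by blast
qed auto

lemma rec_of_ex: assumes "finite I"
  shows "\<exists>xs. set xs = I \<and> distinct xs \<and> rec_of I l s = recl (map (\<lambda>i. (l i, s i)) xs)"
proof -
  obtain xs where "set xs = I \<and> distinct xs" using finite_distinct_list[OF assms] by blast
  then have "set (SOME xs. set xs = I \<and> distinct xs) = I \<and> distinct (SOME xs. set xs = I \<and> distinct xs)"
    by (rule someI)
  then show ?thesis unfolding rec_of_def by (intro exI[of _ "SOME xs. set xs = I \<and> distinct xs"]) simp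
qed

lemma MK: "set xs = S \<Longrightarrow> distinct xs \<Longrightarrow> inj_on l U \<Longrightarrow> S \<subseteq> U \<Longrightarrow> k \<in> U \<Longrightarrow>
  map_of (map (\<lambda>i. (l i, f i)) xs) (l k) = (if k \<in> S then Some (f k) else None)"
proof (cases "k \<in> S")
  case True
  assume a: "set xs = S" "distinct xs" "inj_on l U" "S \<subseteq> U" "k \<in> U"
  have "distinct (map fst (map (\<lambda>i. (l i, f i)) xs))"
    using a by (simp add: o_def distinct_map inj_on_subset)
  moreover have "(l k, f k) \<in> set (map (\<lambda>i. (l i, f i)) xs)" using a True by auto
  ultimately show ?thesis using True by (simp add: map_of_is_SomeI)
next
  case False
  assume a: "set xs = S" "distinct xs" "inj_on l U" "S \<subseteq> U" "k \<in> U"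
  have "l k \<notin> l ` S" using inj_on_image_mem_iff[OF a(3) a(5) a(4)] False by simp
  moreover have "fst ` set (map (\<lambda>i. (l i, f i)) xs) = l ` S" using a(1) by (simp add: image_image)
  ultimately show ?thesis using False by (simp add: map_of_eq_None_iff)
qed

lemma MN: "set xs \<subseteq> U \<Longrightarrow> x \<notin> l ` U \<Longrightarrow> map_of (map (\<lambda>i. (l i, f i)) xs) x = None"
proof -
  assume a: "set xs \<subseteq> U" "x \<notin> l ` U"
  have "fst ` set (map (\<lambda>i. (l i, f i)) xs) = l ` set xs" by (simp add: image_image)
  then show ?thesis using a by (auto simp: map_of_eq_None_iff)
qed

lemma DL: "distinct xs \<Longrightarrow> inj_on l U \<Longrightarrow> set xs \<subseteq> U \<Longrightarrow> distinct (map fst (map (\<lambda>i. (l i, f i)) xs))"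
  by (simp add: o_def distinct_map inj_on_subset)
theorem lemma3p7:
  fixes I J :: "'i set" and l :: "'i \<Rightarrow> 'l"
    and \<sigma> \<tau> :: "'i \<Rightarrow> ('a, 'l) ty"
  assumes "finite I" and "finite J"
    and "inj_on l (I \<union> J)"
    and "\<forall>i\<in>I. tp (\<sigma> i)" and "\<forall>j\<in>J. tp (\<tau> j)"
  shows "(sub (rec_of I l \<sigma>) (rec_of J l \<tau>) \<longleftrightarrow> J \<subseteq> I \<and> (\<forall>j\<in>J. sub (\<sigma> j) (\<tau> j)))
    \<and> eqt (Inter (rec_of I l \<sigma>) (rec_of J l \<tau>))
          (rec_of (I \<union> J) l (\<lambda>k. if k \<in> I - J then \<sigma> k
                                 else if k \<in> J - I then \<tau> k
                                 else Inter (\<sigma> k) (\<tau> k)))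
    \<and> eqt (RPlus (rec_of I l \<sigma>) (rec_of J l \<tau>))
          (rec_of ((I - J) \<union> J) l (\<lambda>k. if k \<in> J then \<tau> k else \<sigma> k))
    \<and> (\<forall>\<rho> :: ('a, 'l) ty. rt \<rho> \<longrightarrow>
         (\<exists>(K :: nat set) (l' :: nat \<Rightarrow> 'l) (s :: nat \<Rightarrow> ('a, 'l) ty).
            finite K \<and> inj_on l' K \<and> (\<forall>k\<in>K. tp (s k)) \<and> eqt \<rho> (rec_of K l' s)))"
proof -
  let ?U = "I \<union> J"
  let ?\<kappa> = "\<lambda>k. if k \<in> I - J then \<sigma> k else if k \<in> J - I then \<tau> k else Inter (\<sigma> k) (\<tau> k)"
  let ?\<pi> = "\<lambda>k. if k \<in> J then \<tau> k else \<sigma> k"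
  have inj: "inj_on l ?U" by fact
  obtain xI where xI: "set xI = I" "distinct xI" "rec_of I l \<sigma> = recl (map (\<lambda>i. (l i, \<sigma> i)) xI)"
    using rec_of_ex[OF assms(1)] by blast
  obtain xJ where xJ: "set xJ = J" "distinct xJ" "rec_of J l \<tau> = recl (map (\<lambda>i. (l i, \<tau> i)) xJ)"
    using rec_of_ex[OF assms(2)] by blast
  have fU: "finite ?U" using assms(1,2) by simp
  obtain xU where xU: "set xU = ?U" "distinct xU" "rec_of ?U l ?\<kappa> = recl (map (\<lambda>i. (l i, ?\<kappa> i)) xU)"
    using rec_of_ex[OF fU] by blast
  have fP: "finite ((I - J) \<union> J)" using assms(1,2) by simp
  obtain xP where xP: "set xP = (I - J) \<union> J" "distinct xP" "rec_of ((I - J) \<union> J) l ?\<pi> = recl (map (\<lambda>i. (l i, ?\<pi> i)) xP)"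
    using rec_of_ex[OF fP] by blast
  define A where "A = map (\<lambda>i. (l i, \<sigma> i)) xI"
  define B where "B = map (\<lambda>i. (l i, \<tau> i)) xJ"
  define C where "C = map (\<lambda>i. (l i, ?\<kappa> i)) xU"
  define D where "D = map (\<lambda>i. (l i, ?\<pi> i)) xP"
  have dA: "distinct (map fst A)" unfolding A_def using DL[OF xI(2) inj] xI(1) by auto
  have dB: "distinct (map fst B)" unfolding B_def using DL[OF xJ(2) inj] xJ(1) by auto
  have dC: "distinct (map fst C)" unfolding C_def using DL[OF xU(2) inj] xU(1) by auto
  have dD: "distinct (map fst D)" unfolding D_def using DL[OF xP(2) inj] xP(1) by auto
  have tA: "tpf A" unfolding A_def using xI(1) assms(4) by auto
  have tB: "tpf B" unfolding B_def using xJ(1) assms(5) by auto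
  have tk: "\<forall>k\<in>?U. tp (?\<kappa> k)" using assms(4,5) by (auto intro: tp_rt.tp_inter)
  have tC: "tpf C" unfolding C_def using xU(1) tk by auto
  have tD: "tpf D" unfolding D_def using xP(1) assms(4,5) by auto
  have mA: "\<And>k. k \<in> ?U \<Longrightarrow> map_of A (l k) = (if k \<in> I then Some (\<sigma> k) else None)"
    unfolding A_def using MK[OF xI(1,2) inj, where f=\<sigma>] by auto
  have mB: "\<And>k. k \<in> ?U \<Longrightarrow> map_of B (l k) = (if k \<in> J then Some (\<tau> k) else None)"
    unfolding B_def using MK[OF xJ(1,2) inj, where f=\<tau>] by auto
  have mC: "\<And>k. k \<in> ?U \<Longrightarrow> map_of C (l k) = Some (?\<kappa> k)"
    unfolding C_def using MK[OF xU(1,2) inj, where f="?\<kappa>"] by auto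
  have mD: "\<And>k. k \<in> ?U \<Longrightarrow> map_of D (l k) = Some (?\<pi> k)"
    unfolding D_def using MK[OF xP(1,2) inj, where f="?\<pi>"] by auto
  have nA: "\<And>x. x \<notin> l ` ?U \<Longrightarrow> map_of A x = None" unfolding A_def by (rule MN[where U="I \<union> J"]) (use xI(1) in auto)
  have nB: "\<And>x. x \<notin> l ` ?U \<Longrightarrow> map_of B x = None" unfolding B_def by (rule MN[where U="I \<union> J"]) (use xJ(1) in auto)
  have nC: "\<And>x. x \<notin> l ` ?U \<Longrightarrow> map_of C x = None" unfolding C_def by (rule MN[where U="I \<union> J"]) (use xU(1) in auto)
  have nD: "\<And>x. x \<notin> l ` ?U \<Longrightarrow> map_of D x = None" unfolding D_def by (rule MN[where U="I \<union> J"]) (use xP(1) in auto)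
  have P1: "sub (rec_of I l \<sigma>) (rec_of J l \<tau>) \<longleftrightarrow> J \<subseteq> I \<and> (\<forall>j\<in>J. sub (\<sigma> j) (\<tau> j))"
  proof -
    have "sub (rec_of I l \<sigma>) (rec_of J l \<tau>) \<longleftrightarrow>
      (\<forall>x t. map_of B x = Some t \<longrightarrow> (\<exists>s. map_of A x = Some s \<and> sub s t))"
      unfolding xI(3) xJ(3) A_def[symmetric] B_def[symmetric] using recl_sub_iff[OF tA dA dB] .
    also have "\<dots> \<longleftrightarrow> J \<subseteq> I \<and> (\<forall>j\<in>J. sub (\<sigma> j) (\<tau> j))"
    proof
      assume h: "\<forall>x t. map_of B x = Some t \<longrightarrow> (\<exists>s. map_of A x = Some s \<and> sub s t)"
      have "j \<in> I \<and> sub (\<sigma> j) (\<tau> j)" if j: "j \<in> J" for j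
      proof -
        have "map_of B (l j) = Some (\<tau> j)" using mB[of j] j by simp
        then obtain s where s: "map_of A (l j) = Some s" "sub s (\<tau> j)" using h by blast
        then show ?thesis using mA[of j] j by (auto split: if_splits)
      qed
      then show "J \<subseteq> I \<and> (\<forall>j\<in>J. sub (\<sigma> j) (\<tau> j))" by blast
    next
      assume h: "J \<subseteq> I \<and> (\<forall>j\<in>J. sub (\<sigma> j) (\<tau> j))"
      show "\<forall>x t. map_of B x = Some t \<longrightarrow> (\<exists>s. map_of A x = Some s \<and> sub s t)"
      proof (intro allI impI)
        fix x t assume b: "map_of B x = Some t"
        then have "x \<in> l ` ?U" using nB by fastforce
        then obtain k where k: "k \<in> ?U" "x = l k" by blast
        then have "k \<in> J" "t = \<tau> k" using b mB[of k] by (auto split: if_splits)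
        then show "\<exists>s. map_of A x = Some s \<and> sub s t" using h k mA[of k] by auto
      qed
    qed
    finally show ?thesis .
  qed
  have eqC: "map_of C = mrg (map_of A) (map_of B)"
  proof
    fix x show "map_of C x = mrg (map_of A) (map_of B) x"
    proof (cases "x \<in> l ` ?U")
      case True
      then obtain k where k: "k \<in> ?U" "x = l k" by blast
      then show ?thesis using mA[of k] mB[of k] mC[of k] by (auto simp: mrg_def)
    next
      case False then show ?thesis using nA nB nC by (simp add: mrg_def)
    qed
  qed
  have eqD: "map_of D = map_of A ++ map_of B"
  proof
    fix x show "map_of D x = (map_of A ++ map_of B) x"
    proof (cases "x \<in> l ` ?U")
      case True
      then obtain k where k: "k \<in> ?U" "x = l k" by blast
      then show ?thesis using mA[of k] mB[of k] mD[of k] by (auto simp: map_add_def)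
    next
      case False then show ?thesis using nA nB nD by (simp add: map_add_def)
    qed
  qed
  have P2: "eqt (Inter (rec_of I l \<sigma>) (rec_of J l \<tau>)) (rec_of ?U l ?\<kappa>)"
    unfolding xI(3) xJ(3) xU(3) A_def[symmetric] B_def[symmetric] C_def[symmetric]
    using recl_inter[OF tA tB tC dA dB dC eqC] .
  have P3: "eqt (RPlus (rec_of I l \<sigma>) (rec_of J l \<tau>)) (rec_of ((I - J) \<union> J) l ?\<pi>)"
    unfolding xI(3) xJ(3) xP(3) A_def[symmetric] B_def[symmetric] D_def[symmetric]
    using recl_plus[OF tA tB tD dA dB dD eqD] .
  have P4: "\<forall>\<rho> :: ('a, 'l) ty. rt \<rho> \<longrightarrow>
         (\<exists>(K :: nat set) (l' :: nat \<Rightarrow> 'l) (s :: nat \<Rightarrow> ('a, 'l) ty).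
            finite K \<and> inj_on l' K \<and> (\<forall>k\<in>K. tp (s k)) \<and> eqt \<rho> (rec_of K l' s))"
  proof (intro allI impI)
    fix \<rho> :: "('a, 'l) ty" assume "rt \<rho>"
    then obtain zs where zs: "tpf zs" "distinct (map fst zs)" "eqt \<rho> (recl zs)" using rt_rep(2) by blast
    define K where "K = {0..<length zs}"
    define l' where "l' = (\<lambda>k. fst (zs ! k))"
    define s where "s = (\<lambda>k. snd (zs ! k))"
    have fK: "finite K" unfolding K_def by simp
    have iK: "inj_on l' K" unfolding inj_on_def K_def l'_def using zs(2)
      by (clarsimp simp: distinct_conv_nth) metis
    have tK: "\<forall>k\<in>K. tp (s k)" unfolding K_def s_def using zs(1) by auto
    obtain xK where xK: "set xK = K" "distinct xK" "rec_of K l' s = recl (map (\<lambda>i. (l' i, s i)) xK)"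
      using rec_of_ex[OF fK] by blast
    define E where "E = map (\<lambda>i. (l' i, s i)) xK"
    have dE: "distinct (map fst E)" unfolding E_def using DL[OF xK(2) iK] xK(1) by auto
    have tE: "tpf E" unfolding E_def using xK(1) tK by auto
    have "set E = (\<lambda>i. zs ! i) ` K" unfolding E_def l'_def s_def using xK(1) by auto
    also have "\<dots> = set zs" unfolding K_def by (auto simp: set_conv_nth)
    finally have "map_of zs = map_of E" using map_of_inject_set[OF zs(2) dE] by simp
    then have "eqt (recl zs) (recl E)" using recl_eq[OF zs(1) tE zs(2) dE] by simp
    then have "eqt \<rho> (rec_of K l' s)" using zs(3) xK(3) E_def eqt_trans by metis
    then show "\<exists>(K :: nat set) (l' :: nat \<Rightarrow> 'l) (s :: nat \<Rightarrow> ('a, 'l) ty).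
            finite K \<and> inj_on l' K \<and> (\<forall>k\<in>K. tp (s k)) \<and> eqt \<rho> (rec_of K l' s)"
      using fK iK tK by blast
  qed
  show ?thesis using P1 P2 P3 P4 by blast
qed

end
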